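(* Let $N\ge2$, $\mathcal N=\{1,\dots,N\}$, $\mathcal F=\{(i,j):i<j\}$, $B,M_1,\dots,M_N\in\mathbb Z_{\ge0}$, $p_1,\dots,p_N\in[0,1]$, $p_{\mathrm{swap}}\in[0,1]$, $\Delta t_{\mathrm{mem}}>0$. Let $\mathcal C=\prod_{i}\{0,1,\dots,M_i\}$ with probability mass function $\pi(c)=\prod_i\binom{M_i}{c_i}p_i^{c_i}(1-p_i)^{M_i-c_i}$. For $c\in\mathcal C$ let $\mathcal Y(c)=\{y\in\mathbb Z_{\ge0}^{\mathcal F}: \sum_{j<i}y_{ji}+\sum_{j>i}y_{ij}\le c_i\ \forall i,\ \sum_{(i,j)\in\mathcal F}y_{ij}\le B\}$. Define $$\Lambda_{\mathrm{mem}}=\Big\{\lambda\in\mathbb R_{\ge0}^{\mathcal F}:\ \exists\, v \text{ with } v(c)\in\mathrm{co}\,\mathcal Y(c)\ \forall c\in\mathcal C,\ \lambda=\frac{p_{\mathrm{swap}}}{\Delta t_{\mathrm{mem}}}\sum_{c\in\mathcal C}\pi(c)v(c)\Big\}.$$ Then $$\max_{\lambda\in\Lambda_{\mathrm{mem}}}\sum_{(i,j)\in\mathcal F}\lambda_{ij}=\frac{p_{\mathrm{swap}}}{\Delta t_{\mathrm{mem}}}\sum_{c\in\mathcal C}\pi(c)\,\min\Big\{B,\ \Big\lfloor\tfrac12\sum_i c_i\Big\rfloor,\ \sum_i c_i-\max_i c_i\Big\}.$$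
   Context: This models a memory-equipped (herald-then-swap) quantum switch: $c_i$ is the number of the $M_i$ switch memories dedicated to client $i$ that hold a successful link-level entangled pair in a slot (each independently with probability $p_i$), $v(c)$ is the expected BSM-pairing vector chosen by a stationary randomized scheduling rule upon observing $c$, $p_{\mathrm{swap}}$ the success probability of each swap, and $\Delta t_{\mathrm{mem}}$ the slot duration; $\mathrm{co}$ denotes convex hull. *)

theory Defs
  imports "HOL-Analysis.Analysis"
begin

definition flows :: "nat \<Rightarrow> (nat \<times> nat) set" where
  "flows N = {(i, j). 1 \<le> i \<and> i < j \<and> j \<le> N}"

definition configs :: "nat \<Rightarrow> (nat \<Rightarrow> nat) \<Rightarrow> (nat \<Rightarrow> nat) set" where
  "configs N M = PiE {1..N} (\<lambda>i. {0..M i})"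

definition pmf_cfg :: "nat \<Rightarrow> (nat \<Rightarrow> nat) \<Rightarrow> (nat \<Rightarrow> real) \<Rightarrow> (nat \<Rightarrow> nat) \<Rightarrow> real" where
  "pmf_cfg N M p c = (\<Prod>i\<in>{1..N}. real (M i choose c i) * p i ^ c i * (1 - p i) ^ (M i - c i))"

definition Yset :: "nat \<Rightarrow> nat \<Rightarrow> (nat \<Rightarrow> nat) \<Rightarrow> ((nat \<times> nat) \<Rightarrow> real) set" where
  "Yset N B c = {y. (\<forall>f. f \<notin> flows N \<longrightarrow> y f = 0)
      \<and> (\<forall>f\<in>flows N. y f \<in> \<nat>)
      \<and> (\<forall>i\<in>{1..N}. (\<Sum>j\<in>{1..<i}. y (j, i)) + (\<Sum>j\<in>{i<..N}. y (i, j)) \<le> real (c i))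
      \<and> (\<Sum>f\<in>flows N. y f) \<le> real B}"

text \<open>Convex hull of a set of real-valued functions: all finite convex combinations
  (the function space carries no real_vector instance in the library).\<close>
definition cohull :: "('a \<Rightarrow> real) set \<Rightarrow> ('a \<Rightarrow> real) set" where
  "cohull S = {x. \<exists>T u. finite T \<and> T \<subseteq> S \<and> T \<noteq> {} \<and> (\<forall>y\<in>T. 0 \<le> u y)
      \<and> sum u T = 1 \<and> x = (\<lambda>k. \<Sum>y\<in>T. u y * y k)}"

definition Lambda_mem :: "nat \<Rightarrow> nat \<Rightarrow> (nat \<Rightarrow> nat) \<Rightarrow> (nat \<Rightarrow> real) \<Rightarrow> real \<Rightarrow> real
    \<Rightarrow> ((nat \<times> nat) \<Rightarrow> real) set" where
  "Lambda_mem N B M p pswap dt = {lam. (\<forall>f\<in>flows N. 0 \<le> lam f) \<and>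
      (\<exists>v. (\<forall>c\<in>configs N M. v c \<in> cohull (Yset N B c)) \<and>
           lam = (\<lambda>f. pswap / dt * (\<Sum>c\<in>configs N M. pmf_cfg N M p c * v c f)))}"

end

theory Submission
  imports Defs
begin


lemma fiber_sum:
  assumes "finite T" "finite J"
  shows "(\<Sum>j\<in>J. card {t\<in>T. h t = j}) = card {t\<in>T. h t \<in> J}"
  using assms(2)
proof (induction J rule: finite_induct)
  case empty then show ?case by simp
next
  case (insert x J)
  have "{t\<in>T. h t \<in> insert x J} = {t\<in>T. h t = x} \<union> {t\<in>T. h t \<in> J}" by auto
  moreover have "card ({t\<in>T. h t = x} \<union> {t\<in>T. h t \<in> J}) = card {t\<in>T. h t = x} + card {t\<in>T. h t \<in> J}"
    by (rule card_Un_disjoint) (use assms(1) insert(2) in auto)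
  ultimately show ?case using insert by simp
qed

definition Pc :: "(nat \<Rightarrow> nat) \<Rightarrow> nat \<Rightarrow> nat" where
  "Pc c i = (\<Sum>j\<in>{1..i}. c j)"
definition Lc :: "(nat \<Rightarrow> nat) \<Rightarrow> nat \<Rightarrow> nat" where
  "Lc c t = (LEAST i. t < Pc c i)"

lemma Pc_0: "Pc c 0 = 0" by (simp add: Pc_def)
lemma Pc_Suc: "Pc c (Suc i) = Pc c i + c (Suc i)"
  by (simp add: Pc_def sum.cl_ivl_Suc)

lemma Lc_props:
  assumes "t < Pc c N"
  shows "1 \<le> Lc c t \<and> Lc c t \<le> N \<and> Pc c (Lc c t - 1) \<le> t \<and> t < Pc c (Lc c t)"
proof -
  have a: "t < Pc c (Lc c t)" unfolding Lc_def by (rule LeastI[of _ N]) (rule assms)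
  have b: "Lc c t \<le> N" unfolding Lc_def by (rule Least_le) (rule assms)
  have c1: "Lc c t \<noteq> 0" using a by (metis Pc_0 not_less0)
  have d: "\<not> t < Pc c (Lc c t - 1)" unfolding Lc_def
    by (rule not_less_Least) (use c1 in \<open>simp add: Lc_def\<close>)
  show ?thesis using a b c1 d by auto
qed

lemma Lc_block:
  assumes "t < Pc c N" "Lc c t = i"
  shows "Pc c i - c i \<le> t \<and> t < Pc c i"
proof -
  from Lc_props[OF assms(1)] assms(2) have "1 \<le> i" "Pc c (i - 1) \<le> t" "t < Pc c i" by auto
  moreover have "Pc c i = Pc c (i - 1) + c i" using \<open>1 \<le> i\<close> Pc_Suc[of c "i - 1"] by simp
  ultimately show ?thesis by simp
qed

lemma card_L_le:
  assumes "i \<in> {1..N}"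
  shows "card {u. u < Pc c N \<and> Lc c u = i} \<le> c i"
proof -
  have "{u. u < Pc c N \<and> Lc c u = i} \<subseteq> {Pc c i - c i..<Pc c i}"
    using Lc_block by fastforce
  then have "card {u. u < Pc c N \<and> Lc c u = i} \<le> card {Pc c i - c i..<Pc c i}"
    by (rule card_mono[rotated]) simp
  also have "\<dots> \<le> c i" by simp
  finally show ?thesis .
qed


lemma construct:
  fixes c :: "nat \<Rightarrow> nat"
  assumes N2: "N \<ge> 2"
    and KB: "K' \<le> B"
    and KK: "K' \<le> min ((\<Sum>i\<in>{1..N}. c i) div 2) ((\<Sum>i\<in>{1..N}. c i) - Max (c ` {1..N}))"
  shows "\<exists>y\<in>Yset N B c. (\<Sum>f\<in>flows N. y f) = real K'"
proof -
  define S where "S = (\<Sum>i\<in>{1..N}. c i)"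
  define m where "m = Max (c ` {1..N})"
  define s where "s = max (S div 2) m"
  define L where "L = Lc c"
  have SP: "S = Pc c N" by (simp add: S_def Pc_def)
  have cm: "c i \<le> m" if "i \<in> {1..N}" for i
    unfolding m_def using that by (intro Max_ge) auto
  have mS: "m \<le> S"
  proof -
    have "m \<in> c ` {1..N}" unfolding m_def using N2 by (intro Max_in) auto
    then obtain k where "k \<in> {1..N}" "m = c k" by auto
    then show ?thesis unfolding S_def by (metis finite_atLeastAtMost member_le_sum zero_le)
  qed
  have Ks: "K' \<le> s" and KsS: "K' + s \<le> S"
    using KK mS unfolding s_def S_def[symmetric] m_def[symmetric] by auto
  have Lp: "1 \<le> L u \<and> L u \<le> N \<and> Pc c (L u) - c (L u) \<le> u \<and> u < Pc c (L u)" if "u < S" for u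
    using Lc_props[of u c N] Lc_block[of u c N] that SP unfolding L_def by auto
  have Ldiff: "L t \<noteq> L (t + s)" if "t < K'" for t
  proof
    assume eq: "L t = L (t + s)"
    have "t < S" "t + s < S" using that KsS by auto
    from Lp[OF this(1)] Lp[OF this(2)] eq have "s < c (L t)" "L t \<in> {1..N}" by auto
    with cm[OF this(2)] show False unfolding s_def by auto
  qed
  define g where "g t = (min (L t) (L (t + s)), max (L t) (L (t + s)))" for t
  have gfl: "g t \<in> flows N" if "t < K'" for t
  proof -
    have "t < S" "t + s < S" using that KsS by auto
    from Lp[OF this(1)] Lp[OF this(2)] Ldiff[OF that] show ?thesis
      unfolding g_def flows_def by auto
  qed
  define y where "y f = (if f \<in> flows N then real (card {t\<in>{..<K'}. g t = f}) else 0)" for f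
  have finfl: "finite (flows N)"
  proof -
    have "flows N \<subseteq> {1..N} \<times> {1..N}" unfolding flows_def by auto
    then show ?thesis by (rule finite_subset) auto
  qed
  have sumy: "(\<Sum>f\<in>flows N. y f) = real K'"
  proof -
    have "(\<Sum>f\<in>flows N. y f) = real (\<Sum>f\<in>flows N. card {t\<in>{..<K'}. g t = f})"
      unfolding y_def by simp
    also have "(\<Sum>f\<in>flows N. card {t\<in>{..<K'}. g t = f}) = card {t\<in>{..<K'}. g t \<in> flows N}"
      by (rule fiber_sum) (use finfl in auto)
    also have "{t\<in>{..<K'}. g t \<in> flows N} = {..<K'}" using gfl by auto
    finally show ?thesis by simp
  qed
  have deg: "(\<Sum>j\<in>{1..<i}. y (j, i)) + (\<Sum>j\<in>{i<..N}. y (i, j)) \<le> real (c i)"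
    if i: "i \<in> {1..N}" for i
  proof -
    define T1 where "T1 = {t\<in>{..<K'}. snd (g t) = i}"
    define T2 where "T2 = {t\<in>{..<K'}. fst (g t) = i}"
    have "(\<Sum>j\<in>{1..<i}. y (j, i)) = real (\<Sum>j\<in>{1..<i}. card {t\<in>T1. fst (g t) = j})"
    proof -
      have "(\<Sum>j\<in>{1..<i}. y (j, i)) = (\<Sum>j\<in>{1..<i}. real (card {t\<in>T1. fst (g t) = j}))"
      proof (rule sum.cong[OF refl])
        fix j assume "j \<in> {1..<i}"
        then have "(j, i) \<in> flows N" using i unfolding flows_def by auto
        moreover have "{t\<in>{..<K'}. g t = (j, i)} = {t\<in>T1. fst (g t) = j}"
          unfolding T1_def by (auto simp: prod_eq_iff)
        ultimately show "y (j, i) = real (card {t\<in>T1. fst (g t) = j})" unfolding y_def by simp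
      qed
      then show ?thesis by simp
    qed
    also have "(\<Sum>j\<in>{1..<i}. card {t\<in>T1. fst (g t) = j}) = card {t\<in>T1. fst (g t) \<in> {1..<i}}"
      by (rule fiber_sum) (auto simp: T1_def)
    also have "\<dots> \<le> card T1" by (rule card_mono) (auto simp: T1_def)
    finally have s1: "(\<Sum>j\<in>{1..<i}. y (j, i)) \<le> real (card T1)" by simp
    have "(\<Sum>j\<in>{i<..N}. y (i, j)) = real (\<Sum>j\<in>{i<..N}. card {t\<in>T2. snd (g t) = j})"
    proof -
      have "(\<Sum>j\<in>{i<..N}. y (i, j)) = (\<Sum>j\<in>{i<..N}. real (card {t\<in>T2. snd (g t) = j}))"
      proof (rule sum.cong[OF refl])
        fix j assume "j \<in> {i<..N}"
        then have "(i, j) \<in> flows N" using i unfolding flows_def by auto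
        moreover have "{t\<in>{..<K'}. g t = (i, j)} = {t\<in>T2. snd (g t) = j}"
          unfolding T2_def by (auto simp: prod_eq_iff)
        ultimately show "y (i, j) = real (card {t\<in>T2. snd (g t) = j})" unfolding y_def by simp
      qed
      then show ?thesis by simp
    qed
    also have "(\<Sum>j\<in>{i<..N}. card {t\<in>T2. snd (g t) = j}) = card {t\<in>T2. snd (g t) \<in> {i<..N}}"
      by (rule fiber_sum) (auto simp: T2_def)
    also have "\<dots> \<le> card T2" by (rule card_mono) (auto simp: T2_def)
    finally have s2: "(\<Sum>j\<in>{i<..N}. y (i, j)) \<le> real (card T2)" by simp
    have "T1 \<inter> T2 = {}"
    proof -
      have "fst (g t) < snd (g t)" if "t < K'" for t using gfl[OF that] unfolding flows_def by auto
      then show ?thesis unfolding T1_def T2_def by fastforce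
    qed
    then have "card T1 + card T2 = card (T1 \<union> T2)"
      by (intro card_Un_disjoint[symmetric]) (auto simp: T1_def T2_def)
    also have "T1 \<union> T2 \<subseteq> {t\<in>{..<K'}. L t = i} \<union> {t\<in>{..<K'}. L (t + s) = i}"
      unfolding T1_def T2_def g_def by (auto simp: min_def max_def split: if_splits)
    then have "card (T1 \<union> T2) \<le> card ({t\<in>{..<K'}. L t = i} \<union> {t\<in>{..<K'}. L (t + s) = i})"
      by (rule card_mono[rotated]) auto
    also have "\<dots> \<le> card {t\<in>{..<K'}. L t = i} + card {t\<in>{..<K'}. L (t + s) = i}"
      by (rule card_Un_le)
    also have "card {t\<in>{..<K'}. L (t + s) = i} = card ((\<lambda>t. t + s) ` {t\<in>{..<K'}. L (t + s) = i})"
      by (rule card_image[symmetric]) (auto simp: inj_on_def)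
    also have "card {t\<in>{..<K'}. L t = i} + \<dots> =
        card ({t\<in>{..<K'}. L t = i} \<union> (\<lambda>t. t + s) ` {t\<in>{..<K'}. L (t + s) = i})"
      by (rule card_Un_disjoint[symmetric]) (use Ks in auto)
    also have "\<dots> \<le> card {u. u < Pc c N \<and> Lc c u = i}"
      by (rule card_mono) (use KsS SP in \<open>auto simp: L_def\<close>)
    also have "\<dots> \<le> c i" by (rule card_L_le[OF i])
    finally show ?thesis using s1 s2 by linarith
  qed
  have "y \<in> Yset N B c"
    unfolding Yset_def
  proof (intro CollectI conjI ballI allI impI)
    show "y f = 0" if "f \<notin> flows N" for f using that unfolding y_def by simp
    show "y f \<in> \<nat>" if "f \<in> flows N" for f unfolding y_def by simp
    show "(\<Sum>j\<in>{1..<i}. y (j, i)) + (\<Sum>j\<in>{i<..N}. y (i, j)) \<le> real (c i)" if "i \<in> {1..N}" for i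
      by (rule deg[OF that])
    show "(\<Sum>f\<in>flows N. y f) \<le> real B" using sumy KB by simp
  qed
  then show ?thesis using sumy by blast
qed


lemma finite_flows: "finite (flows N)"
proof -
  have "flows N \<subseteq> {1..N} \<times> {1..N}" unfolding flows_def by auto
  then show ?thesis by (rule finite_subset) auto
qed

lemma Nats_sum_fin: "finite A \<Longrightarrow> (\<And>x. x \<in> A \<Longrightarrow> (f x :: real) \<in> \<nat>) \<Longrightarrow> sum f A \<in> \<nat>"
  by (induction A rule: finite_induct) (auto intro: Nats_add)

lemma upper:
  fixes c :: "nat \<Rightarrow> nat"
  assumes N2: "N \<ge> 2" and y: "y \<in> Yset N B c"
  shows "(\<Sum>f\<in>flows N. y f) \<le> real (min B (min ((\<Sum>i\<in>{1..N}. c i) div 2)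
                                  ((\<Sum>i\<in>{1..N}. c i) - Max (c ` {1..N}))))"
proof -
  define S where "S = (\<Sum>i\<in>{1..N}. c i)"
  define m where "m = Max (c ` {1..N})"
  define E where "E = (\<Sum>f\<in>flows N. y f)"
  define deg where "deg i = (\<Sum>j\<in>{1..<i}. y (j, i)) + (\<Sum>j\<in>{i<..N}. y (i, j))" for i
  from y have y0: "\<And>f. f \<notin> flows N \<Longrightarrow> y f = 0"
    and yN: "\<And>f. f \<in> flows N \<Longrightarrow> y f \<in> \<nat>"
    and ydeg: "\<And>i. i \<in> {1..N} \<Longrightarrow> deg i \<le> real (c i)"
    and yB: "E \<le> real B"
    unfolding Yset_def deg_def E_def by auto
  have ynn: "0 \<le> y f" if "f \<in> flows N" for f using yN[OF that] by (auto elim: Nats_cases)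
  have EN: "E \<in> \<nat>" unfolding E_def by (rule Nats_sum_fin[OF finite_flows]) (use yN in auto)
  have sig1: "(\<Sum>i\<in>{1..N}. \<Sum>j\<in>{i<..N}. y (i, j)) = E"
  proof -
    have "(\<Sum>i\<in>{1..N}. \<Sum>j\<in>{i<..N}. y (i, j)) = (\<Sum>(i,j)\<in>Sigma {1..N} (\<lambda>i. {i<..N}). y (i, j))"
      by (rule sum.Sigma) auto
    also have "Sigma {1..N} (\<lambda>i. {i<..N}) = flows N" unfolding flows_def by auto
    finally show ?thesis by (simp add: E_def)
  qed
  have sig2: "(\<Sum>i\<in>{1..N}. \<Sum>j\<in>{1..<i}. y (j, i)) = E"
  proof -
    have "(\<Sum>i\<in>{1..N}. \<Sum>j\<in>{1..<i}. y (j, i)) = (\<Sum>(i,j)\<in>Sigma {1..N} (\<lambda>i. {1..<i}). y (j, i))"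
      by (rule sum.Sigma) auto
    also have "Sigma {1..N} (\<lambda>i. {1..<i}) = prod.swap ` flows N" unfolding flows_def
      by (auto simp: image_iff)
    also have "(\<Sum>(i,j)\<in>prod.swap ` flows N. y (j, i)) = (\<Sum>f\<in>flows N. y f)"
      by (subst sum.reindex) (auto simp: inj_on_def)
    finally show ?thesis by (simp add: E_def)
  qed
  have sumdeg: "(\<Sum>i\<in>{1..N}. deg i) = 2 * E"
    unfolding deg_def sum.distrib sig1 sig2 by simp
  have degS: "(\<Sum>i\<in>{1..N}. deg i) \<le> real S"
    unfolding S_def of_nat_sum by (rule sum_mono) (rule ydeg)
  obtain n where n: "E = real n" using EN by (auto elim: Nats_cases)
  have b1: "n \<le> S div 2" using sumdeg degS n by linarith
  have "m \<in> c ` {1..N}" unfolding m_def using N2 by (intro Max_in) auto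
  then obtain k where k: "k \<in> {1..N}" "m = c k" by auto
  have mS: "m \<le> S" unfolding S_def k(2) using k(1) by (metis finite_atLeastAtMost member_le_sum zero_le)
  have degk: "deg k \<le> E"
  proof -
    have "deg k = (\<Sum>f\<in>(\<lambda>j. (j, k)) ` {1..<k}. y f) + (\<Sum>f\<in>(\<lambda>j. (k, j)) ` {k<..N}. y f)"
      unfolding deg_def by (subst (1 2) sum.reindex) (auto simp: inj_on_def)
    also have "\<dots> = (\<Sum>f\<in>(\<lambda>j. (j, k)) ` {1..<k} \<union> (\<lambda>j. (k, j)) ` {k<..N}. y f)"
      by (rule sum.union_disjoint[symmetric]) auto
    also have "\<dots> \<le> E" unfolding E_def
      by (rule sum_mono2[OF finite_flows]) (use k(1) ynn in \<open>auto simp: flows_def\<close>)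
    finally show ?thesis .
  qed
  have "(\<Sum>i\<in>{1..N}. deg i) = deg k + (\<Sum>i\<in>{1..N} - {k}. deg i)"
    by (rule sum.remove) (use k in auto)
  moreover have "(\<Sum>i\<in>{1..N} - {k}. deg i) \<le> (\<Sum>i\<in>{1..N} - {k}. real (c i))"
    by (rule sum_mono) (use ydeg in auto)
  moreover have "(\<Sum>i\<in>{1..N}. real (c i)) = real (c k) + (\<Sum>i\<in>{1..N} - {k}. real (c i))"
    by (rule sum.remove) (use k in auto)
  ultimately have "E \<le> real S - real m" using sumdeg degk k(2) unfolding S_def of_nat_sum by linarith
  then have b2: "n \<le> S - m" using mS n by linarith
  have "n \<le> B" using yB n by simp
  with b1 b2 show ?thesis unfolding E_def[symmetric] S_def[symmetric] m_def[symmetric] n by simp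
qed


theorem mainTheorem3:
  fixes N B :: nat and M :: "nat \<Rightarrow> nat" and p :: "nat \<Rightarrow> real" and pswap dt :: real
  assumes "N \<ge> 2"
    and "\<forall>i\<in>{1..N}. 0 \<le> p i \<and> p i \<le> 1"
    and "0 \<le> pswap" and "pswap \<le> 1"
    and "dt > 0"
  shows "(\<exists>lam\<in>Lambda_mem N B M p pswap dt.
            (\<Sum>f\<in>flows N. lam f) =
              pswap / dt * (\<Sum>c\<in>configs N M. pmf_cfg N M p c *
                 real (min B (min ((\<Sum>i\<in>{1..N}. c i) div 2)
                                  ((\<Sum>i\<in>{1..N}. c i) - Max (c ` {1..N}))))))
       \<and> (\<forall>lam\<in>Lambda_mem N B M p pswap dt.
            (\<Sum>f\<in>flows N. lam f) \<le>
              pswap / dt * (\<Sum>c\<in>configs N M. pmf_cfg N M p c *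
                 real (min B (min ((\<Sum>i\<in>{1..N}. c i) div 2)
                                  ((\<Sum>i\<in>{1..N}. c i) - Max (c ` {1..N}))))))"
proof -
  define bnd where "bnd c = min B (min ((\<Sum>i\<in>{1..N}. c i) div 2)
                                  ((\<Sum>i\<in>{1..N}. c i) - Max (c ` {1..N})))" for c :: "nat \<Rightarrow> nat"
  have pmf0: "0 \<le> pmf_cfg N M p c" for c
    unfolding pmf_cfg_def using assms(2) by (intro prod_nonneg) auto
  have k0: "0 \<le> pswap / dt" using assms by simp
  have finC: "finite (configs N M)" unfolding configs_def by (rule finite_PiE) auto
  have lamsum: "(\<Sum>f\<in>flows N. pswap / dt * (\<Sum>c\<in>configs N M. pmf_cfg N M p c * v c f))
      = pswap / dt * (\<Sum>c\<in>configs N M. pmf_cfg N M p c * (\<Sum>f\<in>flows N. v c f))" for v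
    by (simp add: sum_distrib_left sum.swap[of _ "flows N"])
  have part1: "\<exists>lam\<in>Lambda_mem N B M p pswap dt.
      (\<Sum>f\<in>flows N. lam f) = pswap / dt * (\<Sum>c\<in>configs N M. pmf_cfg N M p c * real (bnd c))"
  proof -
    have "\<forall>c. \<exists>y. y \<in> Yset N B c \<and> (\<Sum>f\<in>flows N. y f) = real (bnd c)"
      using construct[OF assms(1)] unfolding bnd_def by (metis min.cobounded1 min.cobounded2)
    then obtain v where v: "\<And>c. v c \<in> Yset N B c" "\<And>c. (\<Sum>f\<in>flows N. v c f) = real (bnd c)"
      by metis
    have vnn: "0 \<le> v c f" for c f
    proof (cases "f \<in> flows N")
      case True
      then have "v c f \<in> \<nat>" using v(1)[of c] unfolding Yset_def by auto
      then show ?thesis by (auto elim: Nats_cases)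
    next
      case False
      then show ?thesis using v(1)[of c] unfolding Yset_def by (cases f) auto
    qed
    have co: "v c \<in> cohull (Yset N B c)" for c
      unfolding cohull_def
      by (rule CollectI, rule exI[of _ "{v c}"], rule exI[of _ "\<lambda>_. 1"]) (use v(1) in auto)
    define lam where "lam f = pswap / dt * (\<Sum>c\<in>configs N M. pmf_cfg N M p c * v c f)" for f
    have "lam \<in> Lambda_mem N B M p pswap dt"
      unfolding Lambda_mem_def
    proof (intro CollectI conjI ballI exI)
      show "0 \<le> lam f" for f unfolding lam_def
        using k0 pmf0 vnn by (intro mult_nonneg_nonneg sum_nonneg) auto
      show "v c \<in> cohull (Yset N B c)" for c by (rule co)
      show "lam = (\<lambda>f. pswap / dt * (\<Sum>c\<in>configs N M. pmf_cfg N M p c * v c f))"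
        by (simp add: lam_def fun_eq_iff)
    qed
    moreover have "(\<Sum>f\<in>flows N. lam f) = pswap / dt * (\<Sum>c\<in>configs N M. pmf_cfg N M p c * real (bnd c))"
      unfolding lam_def lamsum v(2) ..
    ultimately show ?thesis by blast
  qed
  have part2: "(\<Sum>f\<in>flows N. lam f) \<le> pswap / dt * (\<Sum>c\<in>configs N M. pmf_cfg N M p c * real (bnd c))"
    if lam: "lam \<in> Lambda_mem N B M p pswap dt" for lam
  proof -
    from lam obtain v where v: "\<And>c. c \<in> configs N M \<Longrightarrow> v c \<in> cohull (Yset N B c)"
      and lv: "lam = (\<lambda>f. pswap / dt * (\<Sum>c\<in>configs N M. pmf_cfg N M p c * v c f))"
      unfolding Lambda_mem_def by blast
    have vb: "(\<Sum>f\<in>flows N. v c f) \<le> real (bnd c)" if c: "c \<in> configs N M" for c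
    proof -
      from v[OF c] obtain T u where T: "finite T" "T \<subseteq> Yset N B c" "\<forall>y\<in>T. 0 \<le> u y"
        "sum u T = 1" "v c = (\<lambda>k. \<Sum>y\<in>T. u y * y k)"
        unfolding cohull_def by blast
      have "(\<Sum>f\<in>flows N. v c f) = (\<Sum>y\<in>T. u y * (\<Sum>f\<in>flows N. y f))"
        unfolding T(5) by (simp add: sum_distrib_left sum.swap[of _ "flows N"])
      also have "\<dots> \<le> (\<Sum>y\<in>T. u y * real (bnd c))"
        by (rule sum_mono, rule mult_left_mono) (use T upper[OF assms(1)] in \<open>auto simp: bnd_def\<close>)
      also have "\<dots> = real (bnd c)" using T(4) by (simp add: sum_distrib_right[symmetric])
      finally show ?thesis .
    qed
    have "(\<Sum>f\<in>flows N. lam f) = pswap / dt * (\<Sum>c\<in>configs N M. pmf_cfg N M p c * (\<Sum>f\<in>flows N. v c f))"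
      unfolding lv lamsum ..
    also have "\<dots> \<le> pswap / dt * (\<Sum>c\<in>configs N M. pmf_cfg N M p c * real (bnd c))"
      by (intro mult_left_mono[OF _ k0] sum_mono mult_left_mono[OF _ pmf0] vb)
    finally show ?thesis .
  qed
  show ?thesis using part1 part2 unfolding bnd_def by blast
qed

end
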